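(* Let $\mathbf{A},\mathbf{B}$ be adjacency matrices of two undirected connected graphs on $\mathcal{N}=\{1,\dots,N\}$, let $\beta_1,\delta_1,\beta_2,\delta_2>0$, $\tau_1=\beta_1/\delta_1$, $\tau_2=\beta_2/\delta_2$, and consider the linear bi-virus system $$\frac{d\mathbf{x}}{dt}=\beta_1\mathrm{diag}(\mathbf{1}-\mathbf{x}-\mathbf{y})\mathbf{A}\mathbf{x}-\delta_1\mathbf{x},\qquad \frac{d\mathbf{y}}{dt}=\beta_2\mathrm{diag}(\mathbf{1}-\mathbf{x}-\mathbf{y})\mathbf{B}\mathbf{y}-\delta_2\mathbf{y}$$ on $D=\{(\mathbf{x},\mathbf{y})\in[0,1]^{2N}:\mathbf{x}+\mathbf{y}\le\mathbf{1}\}$. If $\tau_1\lambda(\mathbf{A})\le 1$ and $\tau_2\lambda(\mathbf{B})\le1$, then trajectories starting from any point in $D$ converge to $(\mathbf{0},\mathbf{0})$.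
   Context: $\lambda(\mathbf{M})$ denotes the largest real part of the eigenvalues of $\mathbf{M}$ (the spectral radius for non-negative matrices). *)

theory Defs
  imports "HOL-Analysis.Analysis"
begin

definition adjacency_matrix :: "real^'n^'n \<Rightarrow> bool" where
  "adjacency_matrix A \<longleftrightarrow>
     (\<forall>i j. A $ i $ j = 0 \<or> A $ i $ j = 1) \<and>
     (\<forall>i j. A $ i $ j = A $ j $ i) \<and>
     (\<forall>i. A $ i $ i = 0)"

definition graph_connected :: "real^'n^'n \<Rightarrow> bool" where
  "graph_connected A \<longleftrightarrow> (\<forall>i j. (i, j) \<in> {(u, v). A $ u $ v \<noteq> 0}\<^sup>*)"

definition cmat :: "real^'n^'n \<Rightarrow> complex^'n^'n" where
  "cmat A = (\<chi> i j. complex_of_real (A $ i $ j))"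

definition eigenvalues :: "real^'n^'n \<Rightarrow> complex set" where
  "eigenvalues A = {\<mu>. \<exists>v::complex^'n. v \<noteq> 0 \<and> cmat A *v v = \<mu> *s v}"

definition lambda_max :: "real^'n^'n \<Rightarrow> real" where
  "lambda_max A = Max (Re ` eigenvalues A)"

definition bivirus_domain :: "((real^'n) \<times> (real^'n)) set" where
  "bivirus_domain = {(x, y). (\<forall>i. 0 \<le> x $ i \<and> x $ i \<le> 1 \<and> 0 \<le> y $ i \<and> y $ i \<le> 1
                                      \<and> x $ i + y $ i \<le> 1)}"

definition bivirus_x :: "real^'n^'n \<Rightarrow> real \<Rightarrow> real \<Rightarrow> real^'n \<Rightarrow> real^'n \<Rightarrow> real^'n" where
  "bivirus_x A \<beta> \<delta> x y = (\<chi> i. \<beta> * (1 - x $ i - y $ i) * (A *v x) $ i - \<delta> * x $ i)"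

end

theory Submission
  imports Defs
begin


lemma quad_zero:
  fixes a b :: real
  assumes "\<And>r. 2*r*a + r^2*b \<le> 0"
  shows "a = 0"
proof (rule ccontr)
  assume "a \<noteq> 0"
  define t where "t = 1/(\<bar>b\<bar>+1)"
  have t: "t > 0" "t*\<bar>b\<bar> < 1" unfolding t_def by (auto simp: field_simps)
  have "2*(t*a)*a + (t*a)^2*b \<le> 0" by (rule assms)
  hence "t*a^2*(2 + t*b) \<le> 0" by (simp add: power2_eq_square algebra_simps)
  moreover have "t*a^2 > 0" using t \<open>a\<noteq>0\<close> by simp
  moreover have "t*b \<ge> -(t*\<bar>b\<bar>)" using mult_left_mono[of "-\<bar>b\<bar>" b t] t by simp
  ultimately show False using t by (smt (verit) mult_pos_pos)
qed

lemma sym_inner: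
  fixes A :: "real^'n^'n"
  assumes "\<forall>i j. A $ i $ j = A $ j $ i"
  shows "u \<bullet> (A *v z) = z \<bullet> (A *v u)"
proof -
  have T: "transpose A = A" using assms by (simp add: transpose_def vec_eq_iff)
  have "u \<bullet> (A *v z) = (u v* A) \<bullet> z" by (simp add: dot_lmul_matrix)
  also have "u v* A = A *v u" by (metis T vector_transpose_matrix)
  finally show ?thesis by (simp add: inner_commute)
qed

lemma rayleigh_max:
  fixes A :: "real^'n^'n"
  assumes sym: "\<forall>i j. A $ i $ j = A $ j $ i"
  shows "\<exists>\<mu> u. u \<noteq> 0 \<and> A *v u = \<mu> *\<^sub>R u \<and> (\<forall>v. v \<bullet> (A *v v) \<le> \<mu> * (v \<bullet> v))"
proof -
  define q where "q = (\<lambda>v::real^'n. v \<bullet> (A *v v))"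
  have cont: "continuous_on (sphere 0 1) q" unfolding q_def by (intro continuous_intros)
  have ne: "sphere (0::real^'n) 1 \<noteq> {}"
    using norm_axis_1[of undefined] by (metis dist_0_norm mem_sphere empty_iff)
  obtain u where u: "u \<in> sphere 0 1" and umax: "\<And>v. v \<in> sphere 0 1 \<Longrightarrow> q v \<le> q u"
    using continuous_attains_sup[OF compact_sphere ne cont] by blast
  define \<mu> where "\<mu> = q u"
  have nu: "norm u = 1" using u by simp
  have uu: "u \<bullet> u = 1" using nu by (simp add: norm_eq_sqrt_inner)
  have bound: "q v \<le> \<mu> * (v \<bullet> v)" for v
  proof (cases "v = 0")
    case True then show ?thesis by (simp add: q_def)
  next
    case False
    define w where "w = (1 / norm v) *\<^sub>R v"
    have "norm w = 1" using False by (simp add: w_def)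
    hence "q w \<le> \<mu>" using umax by (simp add: \<mu>_def)
    moreover have "q v = (norm v)^2 * q w" using False
      by (simp add: q_def w_def matrix_vector_mult_scaleR power2_eq_square)
    moreover have "v \<bullet> v = (norm v)^2" by (simp add: power2_norm_eq_inner)
    moreover have "(norm v)^2 * q w \<le> (norm v)^2 * \<mu>"
      using \<open>q w \<le> \<mu>\<close> by (rule mult_left_mono) simp
    ultimately show ?thesis by (simp add: mult.commute)
  qed
  have key: "z \<bullet> (A *v u - \<mu> *\<^sub>R u) = 0" for z
  proof (rule quad_zero[where b = "q z - \<mu> * (z \<bullet> z)"])
    fix r :: real
    have "q (u + r *\<^sub>R z) \<le> \<mu> * ((u + r *\<^sub>R z) \<bullet> (u + r *\<^sub>R z))" by (rule bound)
    moreover have "q (u + r *\<^sub>R z) = \<mu> + 2*r*(z \<bullet> (A *v u)) + r^2 * q z"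
      using sym_inner[OF sym, of u z]
      by (simp add: q_def \<mu>_def matrix_vector_right_distrib matrix_vector_mult_scaleR
          inner_add_left inner_add_right power2_eq_square algebra_simps)
    moreover have "(u + r *\<^sub>R z) \<bullet> (u + r *\<^sub>R z) = 1 + 2*r*(z \<bullet> u) + r^2 * (z \<bullet> z)"
      using uu by (simp add: inner_add_left inner_add_right power2_eq_square algebra_simps inner_commute)
    ultimately show "2*r*(z \<bullet> (A *v u - \<mu> *\<^sub>R u)) + r^2 * (q z - \<mu> * (z \<bullet> z)) \<le> 0"
      using uu inner_commute[of u z] by (simp add: inner_diff_right algebra_simps power2_eq_square)
  qed
  have "A *v u = \<mu> *\<^sub>R u"
    using key[of "A *v u - \<mu> *\<^sub>R u"] by simp
  moreover have "u \<noteq> 0" using nu by auto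
  ultimately show ?thesis using bound unfolding q_def by blast
qed

lemma real_eig_in:
  fixes A :: "real^'n^'n"
  assumes "u \<noteq> 0" "A *v u = \<mu> *\<^sub>R u"
  shows "complex_of_real \<mu> \<in> eigenvalues A"
proof -
  define v where "v = (\<chi> i. complex_of_real (u $ i))"
  have "v \<noteq> 0" using assms(1) by (auto simp: v_def vec_eq_iff)
  moreover have "cmat A *v v = complex_of_real \<mu> *s v"
  proof -
    have "(cmat A *v v) $ i = complex_of_real ((A *v u) $ i)" for i
      by (simp add: cmat_def v_def matrix_vector_mult_def)
    thus ?thesis using assms(2) by (simp add: vec_eq_iff v_def)
  qed
  ultimately show ?thesis unfolding eigenvalues_def by blast
qed

lemma eig_real:
  fixes A :: "real^'n^'n"
  assumes sym: "\<forall>i j. A $ i $ j = A $ j $ i" and lam: "l \<in> eigenvalues A"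
  shows "\<exists>u. u \<noteq> 0 \<and> A *v u = Re l *\<^sub>R u"
proof -
  obtain v :: "complex^'n" where v: "v \<noteq> 0" "cmat A *v v = l *s v"
    using lam unfolding eigenvalues_def by blast
  define a where "a = (\<chi> i. Re (v $ i))"
  define b where "b = (\<chi> i. Im (v $ i))"
  define p where "p = Re l"
  define q where "q = Im l"
  have comp: "(\<Sum>j\<in>UNIV. complex_of_real (A $ i $ j) * v $ j) = l * v $ i" for i
    using v(2) unfolding vec_eq_iff by (simp add: cmat_def matrix_vector_mult_def)
  have Aa: "A *v a = p *\<^sub>R a - q *\<^sub>R b"
  proof -
    have "(A *v a) $ i = (p *\<^sub>R a - q *\<^sub>R b) $ i" for i
      using arg_cong[OF comp[of i], of Re]
      by (simp add: matrix_vector_mult_def a_def b_def p_def q_def Re_sum)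
    thus ?thesis by (simp add: vec_eq_iff)
  qed
  have Ab: "A *v b = p *\<^sub>R b + q *\<^sub>R a"
  proof -
    have "(A *v b) $ i = (p *\<^sub>R b + q *\<^sub>R a) $ i" for i
      using arg_cong[OF comp[of i], of Im]
      by (simp add: matrix_vector_mult_def a_def b_def p_def q_def Im_sum algebra_simps)
    thus ?thesis by (simp add: vec_eq_iff)
  qed
  have "a \<bullet> (A *v b) = b \<bullet> (A *v a)" by (rule sym_inner[OF sym])
  hence "q * (a \<bullet> a + b \<bullet> b) = 0" unfolding Aa Ab
    by (simp add: inner_add_right inner_diff_right inner_commute algebra_simps)
  moreover have "a \<noteq> 0 \<or> b \<noteq> 0"
  proof (rule ccontr)
    assume "\<not> (a \<noteq> 0 \<or> b \<noteq> 0)"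
    hence "\<forall>i. Re (v $ i) = 0 \<and> Im (v $ i) = 0" by (simp add: a_def b_def vec_eq_iff)
    hence "v = 0" by (simp add: vec_eq_iff complex_eq_iff)
    with v show False by simp
  qed
  hence "a \<bullet> a + b \<bullet> b > 0"
    by (metis add_nonneg_pos add_pos_nonneg inner_gt_zero_iff inner_ge_zero)
  ultimately have "q = 0" by simp
  hence "A *v a = p *\<^sub>R a" "A *v b = p *\<^sub>R b" using Aa Ab by auto
  thus ?thesis using \<open>a \<noteq> 0 \<or> b \<noteq> 0\<close> p_def by blast
qed

lemma finite_real_eigs:
  fixes A :: "real^'n^'n"
  assumes sym: "\<forall>i j. A $ i $ j = A $ j $ i"
  shows "finite {\<mu>. \<exists>u. u \<noteq> 0 \<and> A *v u = \<mu> *\<^sub>R u}" (is "finite ?R")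
proof -
  define e where "e = (\<lambda>\<mu>. SOME u. u \<noteq> 0 \<and> A *v u = \<mu> *\<^sub>R u)"
  have e: "e \<mu> \<noteq> 0 \<and> A *v e \<mu> = \<mu> *\<^sub>R e \<mu>" if "\<mu> \<in> ?R" for \<mu>
    using that unfolding e_def by (metis (mono_tags, lifting) mem_Collect_eq someI_ex)
  have orth: "e \<mu>1 \<bullet> e \<mu>2 = 0" if "\<mu>1 \<in> ?R" "\<mu>2 \<in> ?R" "\<mu>1 \<noteq> \<mu>2" for \<mu>1 \<mu>2
  proof -
    have "e \<mu>1 \<bullet> (A *v e \<mu>2) = e \<mu>2 \<bullet> (A *v e \<mu>1)" by (rule sym_inner[OF sym])
    hence "\<mu>2 * (e \<mu>1 \<bullet> e \<mu>2) = \<mu>1 * (e \<mu>1 \<bullet> e \<mu>2)"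
      using e[OF that(1)] e[OF that(2)] by (simp add: inner_commute)
    thus ?thesis using that(3) by simp
  qed
  have inj: "inj_on e ?R"
  proof (rule inj_onI)
    fix \<mu>1 \<mu>2 assume h: "\<mu>1 \<in> ?R" "\<mu>2 \<in> ?R" "e \<mu>1 = e \<mu>2"
    show "\<mu>1 = \<mu>2"
    proof (rule ccontr)
      assume "\<mu>1 \<noteq> \<mu>2"
      hence "e \<mu>1 \<bullet> e \<mu>1 = 0" using orth[OF h(1,2)] h(3) by simp
      thus False using e[OF h(1)] by simp
    qed
  qed
  have "pairwise orthogonal (e ` ?R)"
  proof (rule pairwiseI)
    fix a b assume ab: "a \<in> e ` ?R" "b \<in> e ` ?R" "a \<noteq> b"
    then obtain m1 m2 where m: "m1 \<in> ?R" "m2 \<in> ?R" "a = e m1" "b = e m2" by blast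
    hence "m1 \<noteq> m2" using ab(3) by auto
    thus "orthogonal a b" unfolding orthogonal_def using orth[OF m(1,2)] m(3,4) by simp
  qed
  moreover have "0 \<notin> e ` ?R"
  proof
    assume "0 \<in> e ` ?R"
    then obtain m where m: "m \<in> ?R" "0 = e m" by (rule imageE)
    thus False using e[OF m(1)] by simp
  qed
  ultimately have "independent (e ` ?R)" by (rule pairwise_orthogonal_independent)
  hence "finite (e ` ?R)" using independent_bound_general by blast
  thus ?thesis using finite_imageD inj by blast
qed

lemma lambda_bound:
  fixes A :: "real^'n^'n"
  assumes sym: "\<forall>i j. A $ i $ j = A $ j $ i"
  shows "v \<bullet> (A *v v) \<le> lambda_max A * (v \<bullet> v)"
proof -
  obtain \<mu> u where mu: "u \<noteq> 0" "A *v u = \<mu> *\<^sub>R u" "\<forall>v. v \<bullet> (A *v v) \<le> \<mu> * (v \<bullet> v)"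
    using rayleigh_max[OF sym] by blast
  have sub: "Re ` eigenvalues A \<subseteq> {\<mu>. \<exists>u. u \<noteq> 0 \<and> A *v u = \<mu> *\<^sub>R u}"
    using eig_real[OF sym] by blast
  have fin: "finite (Re ` eigenvalues A)"
    using finite_subset[OF sub finite_real_eigs[OF sym]] .
  have "\<mu> \<in> Re ` eigenvalues A"
    using real_eig_in[OF mu(1,2)] by (metis Re_complex_of_real image_eqI)
  hence "\<mu> \<le> lambda_max A" unfolding lambda_max_def using fin by simp
  hence "\<mu> * (v \<bullet> v) \<le> lambda_max A * (v \<bullet> v)" by (simp add: mult_right_mono)
  thus ?thesis using mu(3) by (meson order_trans)
qed



definition gsq :: "real \<Rightarrow> real" where "gsq s = (max s 0)^2"

lemma gsq_deriv: "(gsq has_real_derivative 2 * max s 0) (at s)"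
proof -
  consider "s > 0" | "s < 0" | "s = 0" by linarith
  then show ?thesis
  proof cases
    case 1
    have "((\<lambda>s. s^2) has_real_derivative 2 * s) (at s)"
      by (auto intro!: derivative_eq_intros)
    hence "((\<lambda>s. s^2) has_real_derivative 2 * max s 0) (at s)" using 1 by simp
    then show ?thesis
      by (rule has_field_derivative_transform_within_open[where S="{0<..}"]) (use 1 in \<open>auto simp: gsq_def\<close>)
  next
    case 2
    have "((\<lambda>s. 0) has_real_derivative 2 * max s 0) (at s)" using 2 by simp
    then show ?thesis
      by (rule has_field_derivative_transform_within_open[where S="{..<0}"]) (use 2 in \<open>auto simp: gsq_def\<close>)
  next
    case 3
    have ev: "eventually (\<lambda>h. max h 0 = (gsq h - gsq 0) / (h - 0)) (at (0::real))"
      unfolding eventually_at_filter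
      by (auto simp: gsq_def max_def power2_eq_square)
    have "((\<lambda>h. max h 0) \<longlongrightarrow> max 0 0) (at (0::real))"
      by (intro tendsto_intros)
    hence "((\<lambda>h. (gsq h - gsq 0) / (h - 0)) \<longlongrightarrow> 0) (at (0::real))"
      using tendsto_cong[OF ev] by simp
    then show ?thesis using 3 by (simp add: has_field_derivative_iff)
  qed
qed

lemma gsq_nonneg: "gsq s \<ge> 0" by (simp add: gsq_def)
lemma gsq_zero_iff: "gsq s = 0 \<longleftrightarrow> s \<le> 0" by (simp add: gsq_def max_def)
lemma gsq_eq: "gsq s = (max s 0)^2" by (simp add: gsq_def)

lemma neg_prod: fixes c a :: real shows "-(c*a) \<le> \<bar>c\<bar> * max (-a) 0 + max (-c) 0 * \<bar>a\<bar>"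
proof (cases "c \<ge> 0")
  case True
  then show ?thesis
  proof (cases "a \<ge> 0")
    case True with \<open>c \<ge> 0\<close> show ?thesis by (simp add: max_def)
  next
    case False with \<open>c \<ge> 0\<close> show ?thesis by (simp add: max_def)
  qed
next
  case False
  then show ?thesis
  proof (cases "a \<ge> 0")
    case True with \<open>\<not> c \<ge> 0\<close> show ?thesis by (simp add: max_def)
  next
    case False with \<open>\<not> c \<ge> 0\<close> show ?thesis
      by (simp add: max_def mult_nonneg_nonneg) (smt (verit) mult_neg_neg)
  qed
qed

lemma pos_imp_mult: fixes n d k :: real
  assumes "n \<ge> 0" "n > 0 \<Longrightarrow> d \<le> k" shows "n * d \<le> n * k"
  using assms by (cases "n = 0") (auto intro: mult_left_mono)

lemma comp_deriv:
  fixes x :: "real \<Rightarrow> real^'n"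
  assumes "(x has_vector_derivative D) F"
  shows "((\<lambda>t. x t $ i) has_real_derivative D $ i) F"
  using bounded_linear.has_vector_derivative[OF bounded_linear_vec_nth assms]
  by (simp add: has_real_derivative_iff_has_vector_derivative)

lemma mat_abs_bound:
  fixes A :: "real^'n^'n"
  assumes A01: "\<forall>i j. A$i$j = 0 \<or> A$i$j = 1" and C: "\<forall>j. \<bar>v $ j\<bar> \<le> C"
  shows "\<bar>(A *v v) $ i\<bar> \<le> real CARD('n) * C"
proof -
  have "\<bar>(A *v v) $ i\<bar> \<le> (\<Sum>j\<in>UNIV. \<bar>A$i$j * v$j\<bar>)"
    unfolding matrix_vector_mult_def by (simp add: sum_abs)
  also have "\<dots> \<le> (\<Sum>j\<in>(UNIV::'n set). C)"
  proof -
    have pw: "\<bar>A$i$j * v$j\<bar> \<le> C" for j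
      using A01[rule_format, of i j] C[rule_format, of j] by (elim disjE) auto
    show ?thesis by (intro sum_mono pw)
  qed
  finally show ?thesis by simp
qed

lemma mat_neg_bound:
  fixes A :: "real^'n^'n"
  assumes A01: "\<forall>i j. A$i$j = 0 \<or> A$i$j = 1"
  shows "-((A *v v) $ i) \<le> (\<Sum>j\<in>UNIV. max (-(v$j)) 0)"
proof -
  have "(\<Sum>j\<in>UNIV. -max (-(v$j)) 0) \<le> (\<Sum>j\<in>UNIV. A$i$j * v$j)"
  proof (rule sum_mono)
    fix j show "-max (-(v$j)) 0 \<le> A$i$j * v$j"
      using A01[rule_format, of i j] by (elim disjE) auto
  qed
  thus ?thesis unfolding matrix_vector_mult_def by (simp add: sum_negf)
qed

lemma bivirus_x_nth:
  "bivirus_x A \<beta> \<delta> x y $ i = \<beta> * (1 - x $ i - y $ i) * (A *v x) $ i - \<delta> * x $ i"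
  by (simp add: bivirus_x_def)

lemma invariance:
  fixes A B :: "real^'n^'n" and x y :: "real \<Rightarrow> real^'n"
  assumes A01: "\<forall>i j. A$i$j = 0 \<or> A$i$j = 1" and B01: "\<forall>i j. B$i$j = 0 \<or> B$i$j = 1"
    and pos: "\<beta>1 > 0" "\<delta>1 > 0" "\<beta>2 > 0" "\<delta>2 > 0"
    and init: "(x 0, y 0) \<in> bivirus_domain"
    and dx: "\<And>t. t \<ge> 0 \<Longrightarrow> (x has_vector_derivative bivirus_x A \<beta>1 \<delta>1 (x t) (y t)) (at t within {0..})"
    and dy: "\<And>t. t \<ge> 0 \<Longrightarrow> (y has_vector_derivative bivirus_x B \<beta>2 \<delta>2 (y t) (x t)) (at t within {0..})"
    and T: "T \<ge> 0"
  shows "(x T, y T) \<in> bivirus_domain"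
proof -
  define N where "N = real CARD('n)"
  have N: "N \<ge> 0" by (simp add: N_def)
  define X where "X i t = x t $ i" for i t
  define Y where "Y i t = y t $ i" for i t
  define X' where "X' i t = \<beta>1 * (1 - X i t - Y i t) * (A *v x t) $ i - \<delta>1 * X i t" for i t
  define Y' where "Y' i t = \<beta>2 * (1 - Y i t - X i t) * (B *v y t) $ i - \<delta>2 * Y i t" for i t
  have dX: "((\<lambda>t. X i t) has_real_derivative X' i t) (at t within {0..})" if "t \<ge> 0" for i t
    using comp_deriv[OF dx[OF that], of i] by (simp add: X_def Y_def X'_def bivirus_x_nth)
  have dY: "((\<lambda>t. Y i t) has_real_derivative Y' i t) (at t within {0..})" if "t \<ge> 0" for i t
    using comp_deriv[OF dy[OF that], of i] by (simp add: X_def Y_def Y'_def bivirus_x_nth)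
  have cx: "continuous_on {0..T} x"
    unfolding continuous_on_eq_continuous_within
    using dx has_vector_derivative_continuous continuous_within_subset
    by (metis atLeastAtMost_iff atLeast_iff subsetI)
  have cy: "continuous_on {0..T} y"
    unfolding continuous_on_eq_continuous_within
    using dy has_vector_derivative_continuous continuous_within_subset
    by (metis atLeastAtMost_iff atLeast_iff subsetI)
  obtain Cx where Cx: "\<forall>t\<in>{0..T}. norm (x t) \<le> Cx"
    using compact_imp_bounded[OF compact_continuous_image[OF cx compact_Icc]]
    unfolding bounded_iff by auto
  obtain Cy where Cy: "\<forall>t\<in>{0..T}. norm (y t) \<le> Cy"
    using compact_imp_bounded[OF compact_continuous_image[OF cy compact_Icc]]
    unfolding bounded_iff by auto
  define C where "C = \<bar>Cx\<bar> + \<bar>Cy\<bar>"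
  have C0: "C \<ge> 0" by (simp add: C_def)
  have bX: "\<bar>X i t\<bar> \<le> C" if "t \<in> {0..T}" for i t
  proof -
    have "\<bar>X i t\<bar> \<le> norm (x t)" unfolding X_def using component_le_norm_cart[of "x t" i] by simp
    thus ?thesis using Cx[rule_format, OF that] abs_ge_self[of Cx] abs_ge_zero[of Cy] unfolding C_def by linarith
  qed
  have bY: "\<bar>Y i t\<bar> \<le> C" if "t \<in> {0..T}" for i t
  proof -
    have "\<bar>Y i t\<bar> \<le> norm (y t)" unfolding Y_def using component_le_norm_cart[of "y t" i] by simp
    thus ?thesis using Cy[rule_format, OF that] abs_ge_self[of Cy] abs_ge_zero[of Cx] unfolding C_def by linarith
  qed
  have bAx: "\<bar>(A *v x t) $ i\<bar> \<le> N * C" if "t \<in> {0..T}" for i t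
    unfolding N_def by (rule mat_abs_bound[OF A01]) (use bX[OF that] in \<open>simp add: X_def\<close>)
  have bBy: "\<bar>(B *v y t) $ i\<bar> \<le> N * C" if "t \<in> {0..T}" for i t
    unfolding N_def by (rule mat_abs_bound[OF B01]) (use bY[OF that] in \<open>simp add: Y_def\<close>)
  define nx where "nx i t = max (-X i t) 0" for i t
  define ny where "ny i t = max (-Y i t) 0" for i t
  define sx where "sx i t = max (X i t + Y i t - 1) 0" for i t
  define P where "P t = (\<Sum>i\<in>UNIV. gsq (-X i t) + gsq (-Y i t) + gsq (X i t + Y i t - 1))" for t
  define P' where "P' t = (\<Sum>i\<in>UNIV. 2 * nx i t * (-X' i t) + 2 * ny i t * (-Y' i t)
      + 2 * sx i t * (X' i t + Y' i t))" for t
  have dP: "(P has_real_derivative P' t) (at t within {0..})" if "t \<ge> 0" for t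
  proof -
    have "((\<lambda>t. gsq (-X i t) + gsq (-Y i t) + gsq (X i t + Y i t - 1)) has_real_derivative
       2 * nx i t * (-X' i t) + 2 * ny i t * (-Y' i t) + 2 * sx i t * (X' i t + Y' i t)) (at t within {0..})" for i
    proof -
      have d1: "((\<lambda>t. gsq (-X i t)) has_real_derivative 2 * nx i t * (-X' i t)) (at t within {0..})"
        using DERIV_chain2[OF gsq_deriv DERIV_minus[OF dX[OF that]]] by (simp add: nx_def)
      have d2: "((\<lambda>t. gsq (-Y i t)) has_real_derivative 2 * ny i t * (-Y' i t)) (at t within {0..})"
        using DERIV_chain2[OF gsq_deriv DERIV_minus[OF dY[OF that]]] by (simp add: ny_def)
      have d3: "((\<lambda>t. gsq (X i t + Y i t - 1)) has_real_derivative 2 * sx i t * (X' i t + Y' i t)) (at t within {0..})"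
        using DERIV_chain2[OF gsq_deriv DERIV_diff[OF DERIV_add[OF dX[OF that] dY[OF that]] DERIV_const[of 1]]]
        by (simp add: sx_def)
      show ?thesis by (rule DERIV_add[OF DERIV_add[OF d1 d2] d3])
    qed
    thus ?thesis unfolding P_def P'_def by (rule DERIV_sum)
  qed
  define K0 where "K0 = (\<beta>1 + \<beta>2) * ((1 + 2*C) * N + N * C) + \<delta>1 + \<delta>2"
  define K where "K = 6 * N * K0"
  have Pnn: "P t \<ge> 0" for t by (simp add: P_def sum_nonneg add_nonneg_nonneg gsq_nonneg)
  have bound: "P' t \<le> K * P t" if t: "t \<in> {0..T}" for t
  proof -
    define Z where "Z = sqrt (P t)"
    have Z0: "Z \<ge> 0" using Pnn[of t] by (simp add: Z_def)
    have term_le: "gsq (-X i t) + gsq (-Y i t) + gsq (X i t + Y i t - 1) \<le> P t" for i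
      using member_le_sum[of i UNIV "\<lambda>i. gsq (-X i t) + gsq (-Y i t) + gsq (X i t + Y i t - 1)"]
      by (simp add: P_def add_nonneg_nonneg gsq_nonneg)
    have le_Z: "u \<ge> 0 \<Longrightarrow> u^2 \<le> P t \<Longrightarrow> u \<le> Z" for u
      unfolding Z_def by (rule real_le_rsqrt)
    have nxZ: "nx i t \<le> Z" for i
    proof -
      have "(nx i t)^2 \<le> P t"
        using term_le[of i] zero_le_power2[of "max (-Y i t) 0"] zero_le_power2[of "max (X i t + Y i t - 1) 0"]
        unfolding gsq_eq nx_def nx_def ny_def sx_def by linarith
      thus ?thesis by (intro le_Z) (auto simp: nx_def)
    qed
    have nyZ: "ny i t \<le> Z" for i
    proof -
      have "(ny i t)^2 \<le> P t"
        using term_le[of i] zero_le_power2[of "max (-X i t) 0"] zero_le_power2[of "max (X i t + Y i t - 1) 0"]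
        unfolding gsq_eq ny_def nx_def ny_def sx_def by linarith
      thus ?thesis by (intro le_Z) (auto simp: ny_def)
    qed
    have sxZ: "sx i t \<le> Z" for i
    proof -
      have "(sx i t)^2 \<le> P t"
        using term_le[of i] zero_le_power2[of "max (-X i t) 0"] zero_le_power2[of "max (-Y i t) 0"]
        unfolding gsq_eq sx_def nx_def ny_def sx_def by linarith
      thus ?thesis by (intro le_Z) (auto simp: sx_def)
    qed
    have negAx: "max (-((A *v x t) $ i)) 0 \<le> N * Z" for i
    proof -
      have "-((A *v x t) $ i) \<le> (\<Sum>j\<in>UNIV. nx j t)"
        using mat_neg_bound[OF A01, of "x t" i] by (simp add: nx_def X_def)
      also have "\<dots> \<le> (\<Sum>j\<in>(UNIV::'n set). Z)" by (intro sum_mono nxZ)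
      finally show ?thesis using Z0 N by (simp add: N_def)
    qed
    have negBy: "max (-((B *v y t) $ i)) 0 \<le> N * Z" for i
    proof -
      have "-((B *v y t) $ i) \<le> (\<Sum>j\<in>UNIV. ny j t)"
        using mat_neg_bound[OF B01, of "y t" i] by (simp add: ny_def Y_def)
      also have "\<dots> \<le> (\<Sum>j\<in>(UNIV::'n set). Z)" by (intro sum_mono nyZ)
      finally show ?thesis using Z0 N by (simp add: N_def)
    qed
    have absc: "\<bar>1 - X i t - Y i t\<bar> \<le> 1 + 2*C" for i
      using bX[OF t, of i] bY[OF t, of i] by linarith
    have KX: "-X' i t \<le> K0 * Z" if h: "nx i t > 0" for i
    proof -
      define c where "c = 1 - X i t - Y i t"
      define a where "a = (A *v x t) $ i"
      have "-(c*a) \<le> \<bar>c\<bar> * max (-a) 0 + max (-c) 0 * \<bar>a\<bar>" by (rule neg_prod)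
      also have "\<dots> \<le> (1 + 2*C) * (N * Z) + Z * (N * C)"
        apply (intro add_mono mult_mono)
        using absc[of i] negAx[of i] sxZ[of i] bAx[OF t, of i] Z0 N C0
        by (auto simp: c_def a_def sx_def)
      finally have ca: "-(c*a) \<le> ((1 + 2*C) * N + N * C) * Z" by (simp add: algebra_simps)
      have "X i t < 0" using h by (simp add: nx_def max_def split: if_splits)
      hence "\<delta>1 * X i t \<le> 0" using pos by (simp add: mult_nonneg_nonpos)
      hence "-X' i t \<le> \<beta>1 * (-(c*a))"
        by (simp add: X'_def c_def a_def algebra_simps)
      also have "\<dots> \<le> \<beta>1 * (((1 + 2*C) * N + N * C) * Z)" using mult_left_mono[OF ca, of "\<beta>1"] pos by simp
      also have "\<dots> \<le> K0 * Z"
        unfolding K0_def using pos Z0 N C0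
        by (simp add: algebra_simps add_nonneg_nonneg mult_nonneg_nonneg)
      finally show ?thesis .
    qed
    have KY: "-Y' i t \<le> K0 * Z" if h: "ny i t > 0" for i
    proof -
      define c where "c = 1 - Y i t - X i t"
      define a where "a = (B *v y t) $ i"
      have "-(c*a) \<le> \<bar>c\<bar> * max (-a) 0 + max (-c) 0 * \<bar>a\<bar>" by (rule neg_prod)
      also have "\<dots> \<le> (1 + 2*C) * (N * Z) + Z * (N * C)"
        apply (intro add_mono mult_mono)
        using absc[of i] negBy[of i] sxZ[of i] bBy[OF t, of i] Z0 N C0
        by (auto simp: c_def a_def sx_def algebra_simps)
      finally have ca: "-(c*a) \<le> ((1 + 2*C) * N + N * C) * Z" by (simp add: algebra_simps)
      have "Y i t < 0" using h by (simp add: ny_def max_def split: if_splits)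
      hence "\<delta>2 * Y i t \<le> 0" using pos by (simp add: mult_nonneg_nonpos)
      hence "-Y' i t \<le> \<beta>2 * (-(c*a))"
        by (simp add: Y'_def c_def a_def algebra_simps)
      also have "\<dots> \<le> \<beta>2 * (((1 + 2*C) * N + N * C) * Z)" using mult_left_mono[OF ca, of "\<beta>2"] pos by simp
      also have "\<dots> \<le> K0 * Z"
        unfolding K0_def using pos Z0 N C0
        by (simp add: algebra_simps add_nonneg_nonneg mult_nonneg_nonneg)
      finally show ?thesis .
    qed
    have KS: "X' i t + Y' i t \<le> K0 * Z" if h: "sx i t > 0" for i
    proof -
      define c where "c = 1 - X i t - Y i t"
      have cs: "-c = sx i t" using h by (simp add: sx_def c_def max_def split: if_splits)
      have e: "X' i t + Y' i t = \<beta>1 * (c * (A *v x t) $ i) + \<beta>2 * (c * (B *v y t) $ i)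
          - \<delta>1 * X i t - \<delta>2 * Y i t"
        by (simp add: X'_def Y'_def c_def algebra_simps)
      have t1: "c * (A *v x t) $ i \<le> Z * (N * C)"
      proof -
        have "c * (A *v x t) $ i \<le> \<bar>c\<bar> * \<bar>(A *v x t) $ i\<bar>" by (metis abs_ge_self abs_mult)
        also have "\<dots> \<le> Z * (N * C)"
          using cs sxZ[of i] bAx[OF t, of i] h by (intro mult_mono) auto
        finally show ?thesis .
      qed
      have t2: "c * (B *v y t) $ i \<le> Z * (N * C)"
      proof -
        have "c * (B *v y t) $ i \<le> \<bar>c\<bar> * \<bar>(B *v y t) $ i\<bar>" by (metis abs_ge_self abs_mult)
        also have "\<dots> \<le> Z * (N * C)"
          using cs sxZ[of i] bBy[OF t, of i] h by (intro mult_mono) auto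
        finally show ?thesis .
      qed
      have t3: "- X i t \<le> Z" using nxZ[of i] by (simp add: nx_def)
      have t4: "- Y i t \<le> Z" using nyZ[of i] by (simp add: ny_def)
      have "X' i t + Y' i t \<le> \<beta>1 * (Z * (N * C)) + \<beta>2 * (Z * (N * C)) + \<delta>1 * Z + \<delta>2 * Z"
        unfolding e using mult_left_mono[OF t1 less_imp_le[OF pos(1)]] mult_left_mono[OF t2 less_imp_le[OF pos(3)]]
          mult_left_mono[OF t3 less_imp_le[OF pos(2)]] mult_left_mono[OF t4 less_imp_le[OF pos(4)]]
        by linarith
      also have "\<dots> \<le> K0 * Z"
        unfolding K0_def using pos Z0 N C0
        by (simp add: algebra_simps add_nonneg_nonneg mult_nonneg_nonneg)
      finally show ?thesis .
    qed
    have each: "2 * nx i t * (-X' i t) + 2 * ny i t * (-Y' i t) + 2 * sx i t * (X' i t + Y' i t)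
        \<le> 6 * K0 * P t" for i
    proof -
      have "nx i t * (-X' i t) \<le> nx i t * (K0 * Z)"
        by (rule pos_imp_mult) (use KX[of i] in \<open>auto simp: nx_def\<close>)
      moreover have "ny i t * (-Y' i t) \<le> ny i t * (K0 * Z)"
        by (rule pos_imp_mult) (use KY[of i] in \<open>auto simp: ny_def\<close>)
      moreover have "sx i t * (X' i t + Y' i t) \<le> sx i t * (K0 * Z)"
        by (rule pos_imp_mult) (use KS[of i] in \<open>auto simp: sx_def\<close>)
      moreover have K00: "K0 * Z \<ge> 0" unfolding K0_def using pos Z0 N C0
        by (simp add: add_nonneg_nonneg mult_nonneg_nonneg)
      moreover have "nx i t * (K0 * Z) \<le> Z * (K0 * Z)" by (rule mult_right_mono[OF nxZ K00])
      moreover have "ny i t * (K0 * Z) \<le> Z * (K0 * Z)" by (rule mult_right_mono[OF nyZ K00])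
      moreover have "sx i t * (K0 * Z) \<le> Z * (K0 * Z)" by (rule mult_right_mono[OF sxZ K00])
      moreover have "Z * Z = P t" unfolding Z_def using Pnn[of t] by simp
      ultimately show ?thesis by (simp add: algebra_simps)
    qed
    have "P' t \<le> (\<Sum>i\<in>(UNIV::'n set). 6 * K0 * P t)" unfolding P'_def by (intro sum_mono each)
    also have "\<dots> = K * P t" by (simp add: K_def N_def)
    finally show ?thesis .
  qed
  define Q where "Q t = exp (-K*t) * P t" for t
  have dQ: "(Q has_real_derivative exp (-K*t) * P' t - K * exp (-K*t) * P t) (at t within {0..})"
    if "t \<ge> 0" for t
    unfolding Q_def
    by (rule DERIV_mult[OF _ dP[OF that], THEN DERIV_cong])
       (auto intro!: derivative_eq_intros simp: algebra_simps)
  have cQ: "continuous_on {0..T} Q"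
    using DERIV_continuous[OF dQ] continuous_within_subset
    unfolding continuous_on_eq_continuous_within
    by (metis atLeastAtMost_iff atLeast_iff subsetI)
  have "Q T \<le> Q 0"
  proof (rule DERIV_nonpos_imp_decreasing_open[OF T _ cQ])
    fix t assume t: "0 < t" "t < T"
    have "(Q has_real_derivative exp (-K*t) * P' t - K * exp (-K*t) * P t) (at t)"
      using dQ[of t] t at_within_interior[of t "{0..}"] by simp
    moreover have "exp (-K*t) * P' t - K * exp (-K*t) * P t \<le> 0"
    proof -
      have "exp (-K*t) * P' t \<le> exp (-K*t) * (K * P t)"
        using bound[of t] t by (intro mult_left_mono) auto
      thus ?thesis by (simp add: algebra_simps)
    qed
    ultimately show "\<exists>y. (Q has_real_derivative y) (at t) \<and> y \<le> 0" by blast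
  qed
  moreover have "P 0 = 0"
  proof -
    have "gsq (-X i 0) + gsq (-Y i 0) + gsq (X i 0 + Y i 0 - 1) = 0" for i
      using init unfolding bivirus_domain_def X_def Y_def
      by (auto simp: gsq_def max_def)
    thus ?thesis unfolding P_def by simp
  qed
  ultimately have "Q T \<le> 0" by (simp add: Q_def)
  hence "P T \<le> 0" unfolding Q_def by (simp add: mult_le_0_iff)
  hence PT: "P T = 0" using Pnn[of T] by simp
  have "gsq (-X i T) + gsq (-Y i T) + gsq (X i T + Y i T - 1) = 0" for i
    using PT unfolding P_def
    by (subst (asm) sum_nonneg_eq_0_iff) (auto intro!: add_nonneg_nonneg gsq_nonneg)
  hence "gsq (-X i T) = 0 \<and> gsq (-Y i T) = 0 \<and> gsq (X i T + Y i T - 1) = 0" for i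
    using gsq_nonneg by (smt (verit))
  hence "X i T \<ge> 0 \<and> Y i T \<ge> 0 \<and> X i T + Y i T \<le> 1" for i
    by (simp add: gsq_zero_iff)
  hence "0 \<le> x T $ i \<and> x T $ i \<le> 1 \<and> 0 \<le> y T $ i \<and> y T $ i \<le> 1 \<and> x T $ i + y T $ i \<le> 1" for i
    unfolding X_def Y_def by (smt (verit))
  thus ?thesis unfolding bivirus_domain_def by simp
qed



lemma decay:
  fixes A :: "real^'n^'n" and x y :: "real \<Rightarrow> real^'n"
  assumes A01: "\<forall>i j. A$i$j = 0 \<or> A$i$j = 1"
    and \<beta>: "\<beta> > 0" and \<nu>: "\<nu> > 0" and \<delta>: "\<delta> = \<beta> * \<nu>"
    and quad: "\<And>v. v \<bullet> (A *v v) \<le> \<nu> * (v \<bullet> v)"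
    and nn: "\<And>t i. t \<ge> 0 \<Longrightarrow> x t $ i \<ge> 0 \<and> y t $ i \<ge> 0"
    and dx: "\<And>t. t \<ge> 0 \<Longrightarrow> (x has_vector_derivative bivirus_x A \<beta> \<delta> (x t) (y t)) (at t within {0..})"
  shows "(x \<longlongrightarrow> 0) at_top"
proof -
  define X where "X i t = x t $ i" for i t
  define Y where "Y i t = y t $ i" for i t
  define X' where "X' i t = \<beta> * (1 - X i t - Y i t) * (A *v x t) $ i - \<delta> * X i t" for i t
  have dX: "((\<lambda>t. X i t) has_real_derivative X' i t) (at t within {0..})" if "t \<ge> 0" for i t
    using comp_deriv[OF dx[OF that], of i] by (simp add: X_def Y_def X'_def bivirus_x_nth)
  define V where "V t = (\<Sum>i\<in>UNIV. X i t * X i t)" for t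
  define V' where "V' t = (\<Sum>i\<in>UNIV. 2 * X i t * X' i t)" for t
  have dV: "(V has_real_derivative V' t) (at t within {0..})" if "t \<ge> 0" for t
  proof -
    have "((\<lambda>t. X i t * X i t) has_real_derivative 2 * X i t * X' i t) (at t within {0..})" for i
      using DERIV_mult[OF dX[of t i, OF that] dX[of t i, OF that]] by (simp add: algebra_simps)
    thus ?thesis unfolding V_def V'_def by (rule DERIV_sum)
  qed
  have Vinner: "V t = x t \<bullet> x t" for t
    by (simp add: V_def X_def inner_vec_def)
  have Vnn: "V t \<ge> 0" for t by (simp add: Vinner)
  define F where "F w = (\<Sum>i\<in>UNIV. \<nu> * (w$i * w$i) - w$i * (A *v w)$i + w$i * w$i * (A *v w)$i)"
    for w :: "real^'n"
  have Aw_nn: "(A *v w) $ i \<ge> 0" if "\<forall>j. w $ j \<ge> 0" for w :: "real^'n" and i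
  proof -
    have "A$i$j * w$j \<ge> 0" for j using A01[rule_format, of i j] that by auto
    thus ?thesis unfolding matrix_vector_mult_def by (simp add: sum_nonneg)
  qed
  have F_split: "F w = (\<nu> * (w \<bullet> w) - w \<bullet> (A *v w)) + (\<Sum>i\<in>UNIV. w$i * w$i * (A *v w)$i)" for w
    by (simp add: F_def inner_vec_def sum.distrib sum_subtractf sum_distrib_left)
  have F_nn: "F w \<ge> 0" if "\<forall>j. w $ j \<ge> 0" for w
  proof -
    have "\<nu> * (w \<bullet> w) - w \<bullet> (A *v w) \<ge> 0" using quad[of w] by simp
    moreover have "(\<Sum>i\<in>UNIV. w$i * w$i * (A *v w)$i) \<ge> 0"
      using Aw_nn[OF that] by (intro sum_nonneg) simp
    ultimately show ?thesis using F_split[of w] by linarith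
  qed
  have F_pos: "F w > 0" if w: "\<forall>j. w $ j \<ge> 0" and ww: "w \<bullet> w > 0" for w
  proof (rule ccontr)
    assume "\<not> F w > 0"
    have q: "\<nu> * (w \<bullet> w) - w \<bullet> (A *v w) \<ge> 0" using quad[of w] by simp
    have s: "(\<Sum>i\<in>UNIV. w$i * w$i * (A *v w)$i) \<ge> 0"
      using Aw_nn[OF w] by (intro sum_nonneg) simp
    have "(\<Sum>i\<in>UNIV. w$i * w$i * (A *v w)$i) = 0"
      using \<open>\<not> F w > 0\<close> F_split[of w] q s by linarith
    hence z: "w$i * w$i * (A *v w)$i = 0" for i
      using Aw_nn[OF w] w by (subst (asm) sum_nonneg_eq_0_iff) auto
    have "w$i * (A *v w)$i = 0" for i using z[of i] by auto
    hence "w \<bullet> (A *v w) = 0" unfolding inner_vec_def inner_real_def by (intro sum.neutral) blast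
    hence "\<nu> * (w \<bullet> w) \<le> 0" using \<open>\<not> F w > 0\<close> F_split[of w] s by linarith
    thus False using \<nu> ww by (simp add: mult_le_0_iff)
  qed
  have V'_le: "V' t \<le> -2 * \<beta> * F (x t)" if t: "t \<ge> 0" for t
  proof -
    have "2 * X i t * X' i t \<le> -2 * \<beta> * (\<nu> * (x t$i * x t$i) - x t$i * (A *v x t)$i
        + x t$i * x t$i * (A *v x t)$i)" for i
    proof -
      have e: "2 * X i t * X' i t - (-2 * \<beta> * (\<nu> * (x t$i * x t$i) - x t$i * (A *v x t)$i
        + x t$i * x t$i * (A *v x t)$i)) = -(2 * \<beta> * (X i t * Y i t * (A *v x t)$i))"
        by (simp add: X'_def X_def \<delta> algebra_simps)
      have "X i t * Y i t * (A *v x t)$i \<ge> 0"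
        using nn[OF t] Aw_nn[of "x t" i] t by (simp add: X_def Y_def)
      hence "2 * \<beta> * (X i t * Y i t * (A *v x t)$i) \<ge> 0" using \<beta> by simp
      thus ?thesis using e by linarith
    qed
    hence "V' t \<le> (\<Sum>i\<in>UNIV. -2 * \<beta> * (\<nu> * (x t$i * x t$i) - x t$i * (A *v x t)$i
        + x t$i * x t$i * (A *v x t)$i))"
      unfolding V'_def by (intro sum_mono)
    also have "\<dots> = -2 * \<beta> * F (x t)" by (simp add: F_def sum_distrib_left)
    finally show ?thesis .
  qed
  have V'_nonpos: "V' t \<le> 0" if "t \<ge> 0" for t
  proof -
    have "F (x t) \<ge> 0" using F_nn nn[OF that] by blast
    hence "2 * \<beta> * F (x t) \<ge> 0" using \<beta> by simp
    thus ?thesis using V'_le[OF that] by linarith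
  qed
  have cV: "continuous_on {a..b} V" if "a \<ge> 0" for a b
    using DERIV_continuous[OF dV] continuous_within_subset that
    unfolding continuous_on_eq_continuous_within
    by (metis atLeastAtMost_iff atLeast_iff order_trans subsetI)
  have Vmono: "V t \<le> V s" if "0 \<le> s" "s \<le> t" for s t
  proof (rule DERIV_nonpos_imp_decreasing_open[OF that(2) _ cV[OF that(1)]])
    fix u assume u: "s < u" "u < t"
    hence "(V has_real_derivative V' u) (at u)"
      using dV[of u] that at_within_interior[of u "{0..}"] by simp
    thus "\<exists>y. (V has_real_derivative y) (at u) \<and> y \<le> 0" using V'_nonpos[of u] u that by auto
  qed
  have small: "\<exists>t0\<ge>0. V t0 < \<epsilon>" if \<epsilon>: "\<epsilon> > 0" for \<epsilon>
  proof (rule ccontr)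
    assume "\<not> ?thesis"
    hence big: "V t \<ge> \<epsilon>" if "t \<ge> 0" for t using that by force
    define S where "S = {w::real^'n. (\<forall>i. w $ i \<ge> 0) \<and> \<epsilon> \<le> w \<bullet> w \<and> w \<bullet> w \<le> V 0}"
    have "closed S"
    proof -
      have c1: "closed {w::real^'n. \<forall>i. 0 \<le> w $ i}"
        by (intro closed_Collect_all closed_Collect_le continuous_on_const continuous_on_component[OF continuous_on_id])
      have c2: "closed {w::real^'n. \<epsilon> \<le> w \<bullet> w}"
        by (intro closed_Collect_le continuous_on_const continuous_on_inner continuous_on_id)
      have c3: "closed {w::real^'n. w \<bullet> w \<le> V 0}"
        by (intro closed_Collect_le continuous_on_const continuous_on_inner continuous_on_id)
      have "S = {w::real^'n. \<forall>i. 0 \<le> w $ i} \<inter> {w. \<epsilon> \<le> w \<bullet> w} \<inter> {w. w \<bullet> w \<le> V 0}"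
        by (auto simp: S_def)
      thus ?thesis using c1 c2 c3 by (simp add: closed_Int)
    qed
    moreover have "bounded S"
    proof -
      have "norm w \<le> sqrt (V 0)" if "w \<in> S" for w
      proof -
        have "(norm w)^2 \<le> V 0" using that by (simp add: S_def power2_norm_eq_inner)
        thus ?thesis by (simp add: real_le_rsqrt)
      qed
      thus ?thesis unfolding bounded_iff by blast
    qed
    ultimately have cS: "compact S" by (simp add: compact_eq_bounded_closed)
    have "x 0 \<in> S" using nn[of 0] big[of 0] by (simp add: S_def Vinner)
    hence neS: "S \<noteq> {}" by blast
    have cF: "continuous_on S F" unfolding F_def by (intro continuous_on_sum continuous_on_add continuous_on_diff continuous_on_mult continuous_on_const continuous_on_component[OF continuous_on_id] continuous_on_component[OF matrix_vector_mult_linear_continuous_on])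
    obtain w0 where w0: "w0 \<in> S" and w0min: "\<forall>w\<in>S. F w0 \<le> F w"
      using continuous_attains_inf[OF cS neS cF] by blast
    define c where "c = F w0"
    have c: "c > 0" unfolding c_def
      using w0 \<epsilon> by (intro F_pos) (auto simp: S_def)
    have inS: "x t \<in> S" if "t \<ge> 0" for t
      using nn[OF that] big[OF that] Vmono[of 0 t] that by (simp add: S_def Vinner)
    define U where "U t = V t + 2 * \<beta> * c * t" for t
    have Umono: "U t \<le> U 0" if "t \<ge> 0" for t
    proof (rule DERIV_nonpos_imp_decreasing_open[OF that])
      fix u assume u: "0 < u" "u < t"
      hence dVu: "(V has_real_derivative V' u) (at u)"
        using dV[of u] at_within_interior[of u "{0..}"] by simp
      have d2: "((\<lambda>t. 2 * \<beta> * c * t) has_real_derivative 2 * \<beta> * c * 1) (at u)"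
        by (rule DERIV_cmult[OF DERIV_ident])
      have "(U has_real_derivative V' u + 2 * \<beta> * c * 1) (at u)"
        unfolding U_def by (rule DERIV_add[OF dVu d2])
      hence "(U has_real_derivative V' u + 2 * \<beta> * c) (at u)" by simp
      moreover have "V' u + 2 * \<beta> * c \<le> 0"
      proof -
        have "F w0 \<le> F (x u)" using w0min inS[of u] u by simp
        hence "-2 * \<beta> * F (x u) \<le> -2 * \<beta> * c" using \<beta> by (simp add: c_def)
        thus ?thesis using V'_le[of u] u by linarith
      qed
      ultimately show "\<exists>y. (U has_real_derivative y) (at u) \<and> y \<le> 0" by blast
    next
      show "continuous_on {0..t} U" unfolding U_def
        by (intro continuous_on_add cV continuous_on_mult continuous_on_const continuous_on_id) simp
    qed
    define t1 where "t1 = V 0 / (\<beta> * c) + 1"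
    have t1: "t1 \<ge> 0" using Vnn[of 0] \<beta> c by (simp add: t1_def)
    have Vt1: "V t1 \<le> V 0 - 2 * \<beta> * c * t1" using Umono[OF t1] by (simp add: U_def)
    have eq: "2 * \<beta> * c * t1 = 2 * V 0 + 2 * \<beta> * c" using \<beta> c
      by (simp add: t1_def field_simps)
    have bc: "\<beta> * c > 0" using \<beta> c by simp
    have "V t1 < 0" using Vt1 eq bc Vnn[of 0] by linarith
    thus False using Vnn[of t1] by simp
  qed
  have "(V \<longlongrightarrow> 0) at_top"
  proof (rule tendstoI)
    fix e :: real assume e: "e > 0"
    obtain t0 where t0: "t0 \<ge> 0" "V t0 < e" using small[OF e] by blast
    have "\<forall>t\<ge>t0. dist (V t) 0 < e"
    proof (intro allI impI)
      fix t assume "t \<ge> t0"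
      hence "V t \<le> V t0" using Vmono[of t0 t] t0(1) by simp
      thus "dist (V t) 0 < e" using Vnn[of t] t0(2) by (simp add: dist_real_def)
    qed
    thus "eventually (\<lambda>t. dist (V t) 0 < e) at_top"
      unfolding eventually_at_top_linorder by blast
  qed
  hence lim: "((\<lambda>t. sqrt (V t)) \<longlongrightarrow> sqrt 0) at_top" by (rule tendsto_real_sqrt)
  have e: "sqrt (V t) = norm (x t)" for t
    unfolding Vinner by (rule norm_eq_sqrt_inner[symmetric])
  have fe: "(\<lambda>t. sqrt (V t)) = (\<lambda>t. norm (x t))" by (intro ext e)
  have "((\<lambda>t. norm (x t)) \<longlongrightarrow> 0) at_top" using lim unfolding fe real_sqrt_zero .
  thus ?thesis by (rule tendsto_norm_zero_cancel)
qed


theorem corollary1: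
  fixes A B :: "real^'n^'n"
    and \<beta>1 \<delta>1 \<beta>2 \<delta>2 :: real
    and x y :: "real \<Rightarrow> real^'n"
  assumes "adjacency_matrix A" "graph_connected A"
    and "adjacency_matrix B" "graph_connected B"
    and "\<beta>1 > 0" "\<delta>1 > 0" "\<beta>2 > 0" "\<delta>2 > 0"
    and "(\<beta>1 / \<delta>1) * lambda_max A \<le> 1"
    and "(\<beta>2 / \<delta>2) * lambda_max B \<le> 1"
    and "(x 0, y 0) \<in> bivirus_domain"
    and "\<And>t. t \<ge> 0 \<Longrightarrow> (x has_vector_derivative bivirus_x A \<beta>1 \<delta>1 (x t) (y t)) (at t within {0..})"
    and "\<And>t. t \<ge> 0 \<Longrightarrow> (y has_vector_derivative bivirus_x B \<beta>2 \<delta>2 (y t) (x t)) (at t within {0..})"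
  shows "((\<lambda>t. (x t, y t)) \<longlongrightarrow> (0, 0)) at_top"
proof -
  have A01: "\<forall>i j. A$i$j = 0 \<or> A$i$j = 1" and Asym: "\<forall>i j. A$i$j = A$j$i"
    using assms(1) unfolding adjacency_matrix_def by auto
  have B01: "\<forall>i j. B$i$j = 0 \<or> B$i$j = 1" and Bsym: "\<forall>i j. B$i$j = B$j$i"
    using assms(3) unfolding adjacency_matrix_def by auto
  have inv: "(x t, y t) \<in> bivirus_domain" if "t \<ge> 0" for t
    by (rule invariance[OF A01 B01 assms(5-8) assms(11) assms(12) assms(13) that])
  have nnx: "x t $ i \<ge> 0 \<and> y t $ i \<ge> 0" if "t \<ge> 0" for t i
    using inv[OF that] unfolding bivirus_domain_def by auto
  have nny: "y t $ i \<ge> 0 \<and> x t $ i \<ge> 0" if "t \<ge> 0" for t i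
    using nnx[OF that] by auto
  have LA: "lambda_max A \<le> \<delta>1 / \<beta>1" using assms(9) assms(5,6) by (simp add: field_simps)
  have LB: "lambda_max B \<le> \<delta>2 / \<beta>2" using assms(10) assms(7,8) by (simp add: field_simps)
  have qA: "v \<bullet> (A *v v) \<le> (\<delta>1 / \<beta>1) * (v \<bullet> v)" for v
  proof -
    have "lambda_max A * (v \<bullet> v) \<le> (\<delta>1 / \<beta>1) * (v \<bullet> v)" by (rule mult_right_mono[OF LA inner_ge_zero])
    thus ?thesis using lambda_bound[OF Asym, of v] by linarith
  qed
  have qB: "v \<bullet> (B *v v) \<le> (\<delta>2 / \<beta>2) * (v \<bullet> v)" for v
  proof -
    have "lambda_max B * (v \<bullet> v) \<le> (\<delta>2 / \<beta>2) * (v \<bullet> v)" by (rule mult_right_mono[OF LB inner_ge_zero])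
    thus ?thesis using lambda_bound[OF Bsym, of v] by linarith
  qed
  have e1: "\<delta>1 = \<beta>1 * (\<delta>1 / \<beta>1)" using assms(5) by simp
  have e2: "\<delta>2 = \<beta>2 * (\<delta>2 / \<beta>2)" using assms(7) by simp
  have p1: "\<delta>1 / \<beta>1 > 0" using assms(5,6) by simp
  have p2: "\<delta>2 / \<beta>2 > 0" using assms(7,8) by simp
  have limx: "(x \<longlongrightarrow> 0) at_top"
    by (rule decay[OF A01 assms(5) p1 e1 qA nnx assms(12)])
  have limy: "(y \<longlongrightarrow> 0) at_top"
    by (rule decay[OF B01 assms(7) p2 e2 qB nny assms(13)])
  show ?thesis by (rule tendsto_Pair[OF limx limy])
qed

end
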